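(* Let $(X,\mathcal{A},\mu,\tau,C_\tau)$ be a composition dynamical system on $\mathbb{L}^{\varphi,h}(\mu)$. Then $C_\tau$ is positively expansive if and only if for every $A\in\mathcal{A}$ with $0<\mu(A)<\infty$, $$\inf_{n\in\mathbb{N}}\ \varphi^{-1}\!\left(\frac{1}{\int_0^{\mu(\tau^{-n}(A))}h(t)\,dt}\right)=0 .$$
   Context: Let $(X,\mathcal{A},\mu)$ be a measure space. For a measurable $g$, its distribution function is $\mu_g(\lambda)=\mu\{x:|g(x)|>\lambda\}$ and its non-increasing rearrangement is $g^*(t)=\inf\{\lambda>0:\mu_g(\lambda)\le t\}$. An Orlicz function is a convex $\varphi:[0,\infty)\to[0,\infty)$ with $\varphi(0)=0$ and $\varphi(s)\to\infty$ as $s\to\infty$; here $\varphi$ is assumed continuous and strictly increasing, and $\varphi^{-1}$ denotes its inverse. A weight is a locally integrable, non-increasing function $h:[0,\mu(X))\to(0,\infty)$. The Orlicz–Lorentz space is $\mathbb{L}^{\varphi,h}(\mu)=\{g \text{ measurable}: I_{\varphi,h}(\lambda g)<\infty \text{ for some }\lambda>0\}$ with $I_{\varphi,h}(g)=\int_0^{\mu(X)}\varphi(g^*(t))h(t)\,dt$, normed by $\|g\|_{\varphi,h}=\inf\{\lambda>0: I_{\varphi,h}(g/\lambda)\le 1\}$ (functions equal a.e. identified). For $A\in\mathcal{A}$ with $0<\mu(A)<\infty$ one has $\|\chi_A\|_{\varphi,h}=1/\varphi^{-1}\big(1/\int_0^{\mu(A)}h(t)\,dt\big)$. A composition dynamical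 system $(X,\mathcal{A},\mu,\tau,C_\tau)$ means: $(X,\mathcal{A},\mu)$ is $\sigma$-finite; $\tau:X\to X$ is injective and bi-measurable; there is $M>0$ with $\mu(\tau^{-1}(A))\le M\mu(A)$ for all $A\in\mathcal{A}$; and $C_\tau g=g\circ\tau$ is the (bounded) composition operator on $\mathbb{L}^{\varphi,h}(\mu)$. A bounded operator $T$ on a Banach space $Y$ with unit sphere $S_Y$ is positively expansive if for every $y\in S_Y$ there is $n\in\mathbb{N}$ with $\|T^n y\|\ge 2$ (equivalently, $\sup_{n\in\mathbb{N}}\|T^n y\|=\infty$ for every $y\ne0$). *)

theory Defs
  imports "HOL-Analysis.Analysis"
begin

definition orlicz :: "(real \<Rightarrow> real) \<Rightarrow> bool" where
  "orlicz \<phi> \<longleftrightarrow> convex_on {0..} \<phi> \<and> \<phi> 0 = 0 \<and> filterlim \<phi> at_top at_top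
     \<and> continuous_on {0..} \<phi> \<and> strict_mono_on {0..} \<phi>"

definition orlicz_inv :: "(real \<Rightarrow> real) \<Rightarrow> real \<Rightarrow> real" where
  "orlicz_inv \<phi> y = the_inv_into {0..} \<phi> y"

text \<open>Extension of the inverse to [0,oo], with infinity mapped to infinity
  (needed for the convention 1/0 = oo).\<close>
definition orlicz_inv_ext :: "(real \<Rightarrow> real) \<Rightarrow> ennreal \<Rightarrow> ennreal" where
  "orlicz_inv_ext \<phi> y = (if y = \<infinity> then \<infinity> else ennreal (orlicz_inv \<phi> (enn2real y)))"

definition wdom :: "'a measure \<Rightarrow> real set" where
  "wdom M = {t. 0 \<le> t \<and> ennreal t < emeasure M (space M)}"

definition weight :: "'a measure \<Rightarrow> (real \<Rightarrow> real) \<Rightarrow> bool" where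
  "weight M h \<longleftrightarrow> (\<forall>t\<in>wdom M. 0 < h t)
     \<and> (\<forall>s\<in>wdom M. \<forall>t\<in>wdom M. s \<le> t \<longrightarrow> h t \<le> h s)
     \<and> (\<forall>t\<in>wdom M. set_integrable lborel {0..t} h)"

definition Wint :: "(real \<Rightarrow> real) \<Rightarrow> real \<Rightarrow> ennreal" where
  "Wint h s = (\<integral>\<^sup>+ t. ennreal (h t) * indicator {0..<s} t \<partial>lborel)"

definition distf :: "'a measure \<Rightarrow> ('a \<Rightarrow> real) \<Rightarrow> ennreal \<Rightarrow> ennreal" where
  "distf M g lam = emeasure M {x \<in> space M. lam < ennreal \<bar>g x\<bar>}"

definition rearr :: "'a measure \<Rightarrow> ('a \<Rightarrow> real) \<Rightarrow> real \<Rightarrow> ennreal" where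
  "rearr M g t = Inf {lam. 0 < lam \<and> distf M g lam \<le> ennreal t}"

definition phi_ext :: "(real \<Rightarrow> real) \<Rightarrow> ennreal \<Rightarrow> ennreal" where
  "phi_ext \<phi> x = (if x = \<infinity> then \<infinity> else ennreal (\<phi> (enn2real x)))"

definition modular :: "'a measure \<Rightarrow> (real \<Rightarrow> real) \<Rightarrow> (real \<Rightarrow> real) \<Rightarrow> ('a \<Rightarrow> real) \<Rightarrow> ennreal" where
  "modular M \<phi> h g =
     (\<integral>\<^sup>+ t. phi_ext \<phi> (rearr M g t) * ennreal (h t) * indicator (wdom M) t \<partial>lborel)"

definition OL_space :: "'a measure \<Rightarrow> (real \<Rightarrow> real) \<Rightarrow> (real \<Rightarrow> real) \<Rightarrow> ('a \<Rightarrow> real) set" where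
  "OL_space M \<phi> h = {g \<in> borel_measurable M. \<exists>lam>0. modular M \<phi> h (\<lambda>x. lam * g x) < \<infinity>}"

definition OL_norm :: "'a measure \<Rightarrow> (real \<Rightarrow> real) \<Rightarrow> (real \<Rightarrow> real) \<Rightarrow> ('a \<Rightarrow> real) \<Rightarrow> real" where
  "OL_norm M \<phi> h g = Inf {lam. 0 < lam \<and> modular M \<phi> h (\<lambda>x. g x / lam) \<le> 1}"

definition comp_dyn_system ::
  "'a measure \<Rightarrow> (real \<Rightarrow> real) \<Rightarrow> (real \<Rightarrow> real) \<Rightarrow> ('a \<Rightarrow> 'a) \<Rightarrow> bool" where
  "comp_dyn_system M \<phi> h \<tau> \<longleftrightarrow>
     sigma_finite_measure M \<and> orlicz \<phi> \<and> weight M h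
     \<and> inj_on \<tau> (space M) \<and> \<tau> \<in> M \<rightarrow>\<^sub>M M \<and> (\<forall>A\<in>sets M. \<tau> ` A \<in> sets M)
     \<and> (\<exists>c>0. \<forall>A\<in>sets M. emeasure M (\<tau> -` A \<inter> space M) \<le> ennreal c * emeasure M A)
     \<and> (\<exists>K. \<forall>g\<in>OL_space M \<phi> h. (\<lambda>x. g (\<tau> x)) \<in> OL_space M \<phi> h
            \<and> OL_norm M \<phi> h (\<lambda>x. g (\<tau> x)) \<le> K * OL_norm M \<phi> h g)"

definition comp_pos_expansive ::
  "'a measure \<Rightarrow> (real \<Rightarrow> real) \<Rightarrow> (real \<Rightarrow> real) \<Rightarrow> ('a \<Rightarrow> 'a) \<Rightarrow> bool" where
  "comp_pos_expansive M \<phi> h \<tau> \<longleftrightarrow>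
     (\<forall>g\<in>OL_space M \<phi> h. OL_norm M \<phi> h g = 1 \<longrightarrow>
        (\<exists>n::nat. OL_norm M \<phi> h (\<lambda>x. g ((\<tau> ^^ n) x)) \<ge> 2))"

end

theory Submission
  imports Defs
begin


lemma orlD: assumes "orlicz \<phi>"
  shows "convex_on {0..} \<phi>" "\<phi> 0 = 0" "filterlim \<phi> at_top at_top"
     "continuous_on {0..} \<phi>" "strict_mono_on {0..} \<phi>"
  using assms unfolding orlicz_def by blast+

lemma orl_nonneg: assumes "orlicz \<phi>" "0 \<le> x" shows "0 \<le> \<phi> x"
proof -
  have "\<phi> 0 \<le> \<phi> x" using assms(2) by (intro strict_mono_on_leD[OF orlD(5)[OF assms(1)]]) auto
  thus ?thesis using orlD(2)[OF assms(1)] by simp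
qed

lemma orl_surj: assumes "orlicz \<phi>" "0 \<le> y" shows "\<exists>x\<ge>0. \<phi> x = y"
proof -
  have "eventually (\<lambda>x. \<phi> x \<ge> y) at_top" using orlD(3)[OF assms(1)] by (simp add: filterlim_at_top)
  then obtain X where X: "\<And>x. x \<ge> X \<Longrightarrow> \<phi> x \<ge> y" by (auto simp: eventually_at_top_linorder)
  define Z where "Z = max X 0"
  have "\<phi> Z \<ge> y" using X by (simp add: Z_def)
  moreover have "continuous_on {0..Z} \<phi>"
    by (rule continuous_on_subset[OF orlD(4)[OF assms(1)]]) auto
  moreover have "\<phi> 0 \<le> y" using assms orlD(2)[OF assms(1)] by simp
  moreover have "0 \<le> Z" by (simp add: Z_def)
  ultimately obtain x where "0 \<le> x" "\<phi> x = y" using IVT'[of \<phi> 0 y Z] by blast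
  thus ?thesis by blast
qed

lemma orl_inv: assumes "orlicz \<phi>" "0 \<le> y"
  shows "0 \<le> orlicz_inv \<phi> y" "\<phi> (orlicz_inv \<phi> y) = y"
proof -
  obtain x where x: "x \<ge> 0" "\<phi> x = y" using orl_surj assms by blast
  have inj: "inj_on \<phi> {0..}" by (rule strict_mono_on_imp_inj_on[OF orlD(5)[OF assms(1)]])
  have "orlicz_inv \<phi> y = x" unfolding orlicz_inv_def using x inj
    by (metis atLeast_iff the_inv_into_f_f)
  thus "0 \<le> orlicz_inv \<phi> y" "\<phi> (orlicz_inv \<phi> y) = y" using x by auto
qed

lemma orl_le_iff: assumes "orlicz \<phi>" "0 \<le> x" "0 \<le> y"
  shows "\<phi> x \<le> y \<longleftrightarrow> x \<le> orlicz_inv \<phi> y"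
proof -
  have "\<phi> x \<le> \<phi> (orlicz_inv \<phi> y) \<longleftrightarrow> x \<le> orlicz_inv \<phi> y"
    using orl_inv[OF assms(1,3)] assms(2) by (intro strict_mono_on_less_eq[OF orlD(5)[OF assms(1)]]) auto
  thus ?thesis using orl_inv[OF assms(1,3)] by simp
qed

lemma orl_inv_pos: assumes "orlicz \<phi>" "0 < y" shows "0 < orlicz_inv \<phi> y"
proof -
  have "orlicz_inv \<phi> y \<noteq> 0"
  proof
    assume "orlicz_inv \<phi> y = 0"
    then have "\<phi> 0 = y" using orl_inv(2)[of \<phi> y] assms by simp
    thus False using assms orlD(2)[OF assms(1)] by simp
  qed
  thus ?thesis using orl_inv(1)[of \<phi> y] assms by simp
qed

lemma orl_convex: assumes "orlicz \<phi>" "0 \<le> s" "s \<le> 1" "0 \<le> x"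
  shows "\<phi> (s * x) \<le> s * \<phi> x"
proof -
  have "\<phi> ((1 - s) *\<^sub>R 0 + s *\<^sub>R x) \<le> (1 - s) * \<phi> 0 + s * \<phi> x"
    using convex_onD[OF orlD(1)[OF assms(1)], of s 0 x] assms by auto
  thus ?thesis using orlD(2)[OF assms(1)] by simp
qed



lemma nn_integral_cmult_ge: "c * integral\<^sup>N M f \<le> (\<integral>\<^sup>+x. c * f x \<partial>M)"
  unfolding nn_integral_def SUP_mult_left_ennreal
proof (rule SUP_least)
  fix g assume g: "g \<in> {g. simple_function M g \<and> g \<le> f}"
  then have "simple_function M (\<lambda>x. c * g x)" "(\<lambda>x. c * g x) \<le> (\<lambda>x. c * f x)"
    by (auto intro: simple_function_mult simple_function_const mult_left_mono simp: le_fun_def)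
  then have "integral\<^sup>S M (\<lambda>x. c * g x) \<le> (SUP g \<in> {g. simple_function M g \<and> g \<le> (\<lambda>x. c * f x)}. integral\<^sup>S M g)"
    by (intro SUP_upper) auto
  thus "c * integral\<^sup>S M g \<le> (SUP g \<in> {g. simple_function M g \<and> g \<le> (\<lambda>x. c * f x)}. integral\<^sup>S M g)"
    using g by simp
qed

lemma nn_integral_cmult_gen:
  assumes "c \<noteq> 0" "c \<noteq> (top::ennreal)"
  shows "(\<integral>\<^sup>+x. c * f x \<partial>M) = c * integral\<^sup>N M f"
proof (rule antisym)
  have ci: "inverse c * c = 1"
  proof -
    have "c / c = 1" using assms by (simp add: top.not_eq_extremum)
    thus ?thesis by (simp add: divide_ennreal_def mult.commute)
  qed
  have ic: "\<And>y. inverse c * (c * y) = y" by (simp add: mult.assoc[symmetric] ci)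
  have ic2: "\<And>y. c * (inverse c * y) = y" by (simp add: mult.assoc[symmetric] mult.commute[of c] ci)
  have "inverse c * (\<integral>\<^sup>+x. c * f x \<partial>M) \<le> (\<integral>\<^sup>+x. inverse c * (c * f x) \<partial>M)"
    by (rule nn_integral_cmult_ge)
  then have "c * (inverse c * (\<integral>\<^sup>+x. c * f x \<partial>M)) \<le> c * integral\<^sup>N M f"
    by (simp add: ic mult_left_mono)
  thus "(\<integral>\<^sup>+x. c * f x \<partial>M) \<le> c * integral\<^sup>N M f"
    by (simp add: ic2)
qed (rule nn_integral_cmult_ge)

lemma distf_ind:
  assumes "B \<subseteq> space M" "0 < b"
  shows "distf M (\<lambda>x. b * indicator B x) lam = (if lam < ennreal b then emeasure M B else 0)"
proof -
  have "{x \<in> space M. lam < ennreal \<bar>b * indicator B x\<bar>} = (if lam < ennreal b then B else {})"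
    using assms by (auto simp: indicator_def)
  thus ?thesis unfolding distf_def by simp
qed

lemma rearr_ind:
  assumes "B \<subseteq> space M" "0 < b"
  shows "rearr M (\<lambda>x. b * indicator B x) t = (if ennreal t < emeasure M B then ennreal b else 0)"
proof (cases "ennreal t < emeasure M B")
  case True
  have "{lam. 0 < lam \<and> distf M (\<lambda>x. b * indicator B x) lam \<le> ennreal t} = {ennreal b..}"
    using True assms by (auto simp: distf_ind not_less intro: order.strict_trans2[of 0 "ennreal b"])
  thus ?thesis using True unfolding rearr_def by simp
next
  case False
  have "{lam. 0 < lam \<and> distf M (\<lambda>x. b * indicator B x) lam \<le> ennreal t} = {0<..}"
    using False assms by (auto simp: distf_ind not_less)
  thus ?thesis using False unfolding rearr_def by simp
qed

lemma modular_ind: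
  assumes "B \<in> sets M" "0 < b" "emeasure M B < \<infinity>" and orl0: "\<phi> 0 = 0"
  shows "modular M \<phi> h (\<lambda>x. b * indicator B x) = ennreal (\<phi> b) * Wint h (enn2real (emeasure M B))"
proof -
  have Bs: "B \<subseteq> space M" using assms sets.sets_into_space by blast
  define s where "s = enn2real (emeasure M B)"
  have ms: "emeasure M B = ennreal s" "0 \<le> s" using assms(3) by (auto simp: s_def ennreal_enn2real_if)
  have le: "emeasure M B \<le> emeasure M (space M)" by (rule emeasure_space)
  have "\<And>t. phi_ext \<phi> (rearr M (\<lambda>x. b * indicator B x) t) * ennreal (h t) * indicator (wdom M) t
       = ennreal (\<phi> b) * (ennreal (h t) * indicator {0..<s} t)"
  proof -
    fix t
    show "?thesis t"
    proof (cases "t \<in> wdom M")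
      case True
      then have t0: "0 \<le> t" by (simp add: wdom_def)
      have "ennreal t < emeasure M B \<longleftrightarrow> t < s" using ms t0 by (simp add: ennreal_less_iff)
      moreover have "phi_ext \<phi> (ennreal b) = ennreal (\<phi> b)" "phi_ext \<phi> 0 = 0"
        using assms(2) orl0 by (auto simp: phi_ext_def)
      ultimately show ?thesis using True t0 
        unfolding rearr_ind[OF Bs assms(2)] by (auto simp: indicator_def)
    next
      case False
      have "t \<notin> {0..<s}"
      proof
        assume "t \<in> {0..<s}"
        then have "ennreal t < ennreal s" "0 \<le> t" by (auto simp: ennreal_less_iff)
        then have "ennreal t < emeasure M (space M)" using le ms by auto
        thus False using False \<open>0 \<le> t\<close> by (simp add: wdom_def)
      qed
      then show ?thesis using False by simp
    qed
  qed
  then have "modular M \<phi> h (\<lambda>x. b * indicator B x) =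
      (\<integral>\<^sup>+ t. ennreal (\<phi> b) * (ennreal (h t) * indicator {0..<s} t) \<partial>lborel)"
    unfolding modular_def by simp
  also have "\<dots> = ennreal (\<phi> b) * Wint h s"
    unfolding Wint_def by (cases "ennreal (\<phi> b) = 0") (simp_all add: nn_integral_cmult_gen)
  finally show ?thesis by (simp add: s_def)
qed



lemma weightD: assumes "weight M h"
  shows "\<And>t. t \<in> wdom M \<Longrightarrow> 0 < h t"
    "\<And>s t. s \<in> wdom M \<Longrightarrow> t \<in> wdom M \<Longrightarrow> s \<le> t \<Longrightarrow> h t \<le> h s"
  using assms unfolding weight_def by blast+

lemma wdom_iff: "t \<in> wdom M \<longleftrightarrow> 0 \<le> t \<and> ennreal t < emeasure M (space M)"
  by (simp add: wdom_def)

lemma Wint_fin: assumes "weight M h" "0 \<le> s" "ennreal s \<le> emeasure M (space M)"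
  shows "Wint h s < \<infinity>"
proof (cases "s = 0")
  case True thus ?thesis by (simp add: Wint_def)
next
  case False
  then have s0: "0 < s" using assms by simp
  have "ennreal 0 < ennreal s" using s0 by (simp add: ennreal_less_iff)
  then have w0: "0 \<in> wdom M" using assms(3) unfolding wdom_iff by (metis order.refl less_le_trans)
  have "\<And>t. ennreal (h t) * indicator {0..<s} t \<le> ennreal (h 0) * indicator {0..<s} t"
  proof -
    fix t
    show "ennreal (h t) * indicator {0..<s} t \<le> ennreal (h 0) * indicator {0..<s} t"
    proof (cases "t \<in> {0..<s}")
      case True
      then have "t \<in> wdom M" using assms(3) by (auto simp: wdom_iff ennreal_less_iff intro: less_le_trans[OF _ assms(3)])
      then have "h t \<le> h 0" using True weightD(2)[OF assms(1) w0] by auto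
      thus ?thesis using True by (simp add: ennreal_leI)
    qed simp
  qed
  then have "Wint h s \<le> (\<integral>\<^sup>+ t. ennreal (h 0) * indicator {0..<s} t \<partial>lborel)"
    unfolding Wint_def by (intro nn_integral_mono) auto
  also have "\<dots> = ennreal (h 0) * ennreal s" using assms(2) by (simp add: nn_integral_cmult_indicator)
  also have "\<dots> < \<infinity>" by (simp add: ennreal_mult_less_top)
  finally show ?thesis .
qed

lemma Wint_pos: assumes "weight M h" "0 < s" "ennreal s \<le> emeasure M (space M)"
  shows "Wint h s \<noteq> 0"
proof -
  have hw: "s/2 \<in> wdom M" using assms by (auto simp: wdom_iff ennreal_less_iff intro: less_le_trans[OF _ assms(3)])
  have "\<And>t. ennreal (h (s/2)) * indicator {0..<s/2} t \<le> ennreal (h t) * indicator {0..<s} t"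
  proof -
    fix t
    show "ennreal (h (s/2)) * indicator {0..<s/2} t \<le> ennreal (h t) * indicator {0..<s} t"
    proof (cases "t \<in> {0..<s/2}")
      case True
      then have "t \<in> wdom M" using assms by (auto simp: wdom_iff ennreal_less_iff intro: less_le_trans[OF _ assms(3)])
      then have "h (s/2) \<le> h t" using True weightD(2)[OF assms(1) _ hw] by auto
      thus ?thesis using True by (simp add: ennreal_leI)
    qed simp
  qed
  then have "(\<integral>\<^sup>+ t. ennreal (h (s/2)) * indicator {0..<s/2} t \<partial>lborel) \<le> Wint h s"
    unfolding Wint_def by (intro nn_integral_mono) auto
  moreover have "(\<integral>\<^sup>+ t. ennreal (h (s/2)) * indicator {0..<s/2} t \<partial>lborel) = ennreal (h (s/2)) * ennreal (s/2)"
    using assms(2) by (simp add: nn_integral_cmult_indicator)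
  moreover have "0 < h (s/2)" using weightD(1)[OF assms(1) hw] .
  moreover have "ennreal (h (s/2)) * ennreal (s/2) \<noteq> 0"
    using \<open>0 < h (s/2)\<close> assms(2) by (simp add: ennreal_mult[symmetric])
  ultimately show ?thesis by (metis le_zero_eq)
qed

lemma distf_cong: "(\<And>x. x \<in> space M \<Longrightarrow> f x = g x) \<Longrightarrow> distf M f = distf M g"
  unfolding distf_def by (intro ext arg_cong[where f="emeasure M"]) auto

lemma modular_cong: "(\<And>x. x \<in> space M \<Longrightarrow> f x = g x) \<Longrightarrow> modular M \<phi> h f = modular M \<phi> h g"
  unfolding modular_def rearr_def by (simp add: distf_cong[of M f g])

lemma OL_norm_cong: "(\<And>x. x \<in> space M \<Longrightarrow> f x = g x) \<Longrightarrow> OL_norm M \<phi> h f = OL_norm M \<phi> h g"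
  unfolding OL_norm_def
  by (intro arg_cong[where f=Inf] Collect_cong conj_cong refl arg_cong2[where f="(\<le>)"] modular_cong) auto

lemma Wint_fin_B: assumes "weight M h" "B \<in> sets M" "emeasure M B < \<infinity>"
  shows "Wint h (enn2real (emeasure M B)) < \<infinity>"
  using assms by (intro Wint_fin) (auto simp: ennreal_enn2real_if emeasure_space)

lemma ind_le_iff: assumes "orlicz \<phi>" "0 \<le> b" "0 < w"
  shows "ennreal (\<phi> b) * ennreal w \<le> 1 \<longleftrightarrow> b \<le> orlicz_inv \<phi> (1/w)"
proof -
  have "ennreal (\<phi> b) * ennreal w = ennreal (\<phi> b * w)" using assms(3) by (simp add: ennreal_mult'')
  moreover have "\<phi> b * w \<le> 1 \<longleftrightarrow> \<phi> b \<le> 1/w" using assms(3) by (simp add: field_simps)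
  moreover have "\<phi> b \<le> 1/w \<longleftrightarrow> b \<le> orlicz_inv \<phi> (1/w)" using assms by (intro orl_le_iff) auto
  ultimately show ?thesis by simp
qed

lemma norm_ind:
  assumes orl: "orlicz \<phi>" and wt: "weight M h" and B: "B \<in> sets M" "emeasure M B < \<infinity>" and a: "0 < a"
    and f: "\<And>x. x \<in> space M \<Longrightarrow> f x = a * indicator B x"
  shows "Wint h (enn2real (emeasure M B)) = 0 \<Longrightarrow> OL_norm M \<phi> h f = 0"
    "Wint h (enn2real (emeasure M B)) \<noteq> 0 \<Longrightarrow>
       OL_norm M \<phi> h f = a / orlicz_inv \<phi> (1 / enn2real (Wint h (enn2real (emeasure M B))))"
proof -
  define W where "W = Wint h (enn2real (emeasure M B))"
  have mod: "modular M \<phi> h (\<lambda>x. f x / lam) = ennreal (\<phi> (a/lam)) * W" if "0 < lam" for lam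
  proof -
    have "modular M \<phi> h (\<lambda>x. f x / lam) = modular M \<phi> h (\<lambda>x. (a/lam) * indicator B x)"
      by (intro modular_cong) (simp add: f)
    also have "\<dots> = ennreal (\<phi> (a/lam)) * W" unfolding W_def
      using that a B orlD(2)[OF orl] by (intro modular_ind) auto
    finally show ?thesis .
  qed
  {
    assume "Wint h (enn2real (emeasure M B)) = 0"
    then have "{lam. 0 < lam \<and> modular M \<phi> h (\<lambda>x. f x / lam) \<le> 1} = {0<..}"
      using mod by (auto simp: W_def)
    thus "OL_norm M \<phi> h f = 0" unfolding OL_norm_def by simp
  }
  {
    assume W0: "Wint h (enn2real (emeasure M B)) \<noteq> 0"
    have "W < \<infinity>" unfolding W_def using Wint_fin_B[OF wt B] .
    then obtain w where w: "W = ennreal w" "0 \<le> w" by (cases W) auto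
    then have wpos: "0 < w" using W0 W_def by (cases "w = 0") auto
    define c where "c = orlicz_inv \<phi> (1/w)"
    have cpos: "0 < c" unfolding c_def using orl wpos by (intro orl_inv_pos) auto
    have "{lam. 0 < lam \<and> modular M \<phi> h (\<lambda>x. f x / lam) \<le> 1} = {a/c..}"
    proof (intro set_eqI iffI)
      fix lam assume "lam \<in> {lam. 0 < lam \<and> modular M \<phi> h (\<lambda>x. f x / lam) \<le> 1}"
      then have l: "0 < lam" "ennreal (\<phi> (a/lam)) * ennreal w \<le> 1" using mod w by auto
      then have "a/lam \<le> c" unfolding c_def using ind_le_iff[OF orl, of "a/lam" w] wpos a by auto
      thus "lam \<in> {a/c..}" using l cpos by (simp add: field_simps)
    next
      fix lam assume "lam \<in> {a/c..}"
      then have l: "0 < lam" "a/c \<le> lam" using a cpos by (auto intro: less_le_trans[OF divide_pos_pos[OF a cpos]])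
      then have "a/lam \<le> c" using cpos by (simp add: field_simps)
      then have "ennreal (\<phi> (a/lam)) * ennreal w \<le> 1" unfolding c_def using ind_le_iff[OF orl, of "a/lam" w] wpos a l by auto
      thus "lam \<in> {lam. 0 < lam \<and> modular M \<phi> h (\<lambda>x. f x / lam) \<le> 1}" using mod w l by auto
    qed
    then have "OL_norm M \<phi> h f = a/c" unfolding OL_norm_def by simp
    thus "OL_norm M \<phi> h f = a / orlicz_inv \<phi> (1 / enn2real (Wint h (enn2real (emeasure M B))))"
      using w by (simp add: c_def W_def[symmetric])
  }
qed



lemma phi_ext_mono: assumes "orlicz \<phi>" "x \<le> y" shows "phi_ext \<phi> x \<le> phi_ext \<phi> y"
proof (cases "y = \<infinity>")
  case True thus ?thesis by (simp add: phi_ext_def)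
next
  case False
  then have "x \<noteq> \<infinity>" using assms(2) by (auto simp: top_unique)
  then have "enn2real x \<le> enn2real y" using assms(2) False by (simp add: enn2real_mono top.not_eq_extremum)
  then have "\<phi> (enn2real x) \<le> \<phi> (enn2real y)"
    by (intro strict_mono_on_leD[OF orlD(5)[OF assms(1)]]) auto
  thus ?thesis using False \<open>x \<noteq> \<infinity>\<close> by (simp add: phi_ext_def ennreal_leI)
qed

lemma modular_mono:
  assumes orl: "orlicz \<phi>" and g: "g \<in> borel_measurable M"
    and le: "\<And>x. x \<in> space M \<Longrightarrow> \<bar>f x\<bar> \<le> \<bar>g x\<bar>"
  shows "modular M \<phi> h f \<le> modular M \<phi> h g"
proof -
  have d: "distf M f lam \<le> distf M g lam" for lam
  proof -
    have "{x \<in> space M. lam < ennreal \<bar>f x\<bar>} \<subseteq> {x \<in> space M. lam < ennreal \<bar>g x\<bar>}"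
      using le by (auto intro: order.strict_trans2 ennreal_leI)
    moreover have "{x \<in> space M. lam < ennreal \<bar>g x\<bar>} \<in> sets M" using g by measurable
    ultimately show ?thesis unfolding distf_def by (rule emeasure_mono)
  qed
  have r: "rearr M f t \<le> rearr M g t" for t
    unfolding rearr_def by (rule Inf_superset_mono) (auto intro: order.trans[OF d])
  show ?thesis unfolding modular_def
    by (intro nn_integral_mono mult_right_mono phi_ext_mono[OF orl] r) auto
qed

lemma ennreal_cmult_less_iff: assumes "c \<noteq> 0" "c \<noteq> (top::ennreal)"
  shows "c * a < c * b \<longleftrightarrow> a < b"
  using ennreal_mult_le_mult_iff[OF assms, of b a] by (simp add: not_le[symmetric])

lemma modular_scale:
  assumes orl: "orlicz \<phi>" and s: "0 < s" "s \<le> 1"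
  shows "modular M \<phi> h (\<lambda>x. s * f x) \<le> ennreal s * modular M \<phi> h f"
proof -
  have sne: "ennreal s \<noteq> 0" "ennreal s \<noteq> top" using s by auto
  have ci: "inverse (ennreal s) * ennreal s = 1"
  proof -
    have "ennreal s / ennreal s = 1" using sne by (simp add: top.not_eq_extremum)
    thus ?thesis by (simp add: divide_ennreal_def mult.commute)
  qed
  have ic2: "\<And>y. ennreal s * (inverse (ennreal s) * y) = y"
    by (simp add: mult.assoc[symmetric] mult.commute[of "ennreal s"] ci)
  have d: "distf M (\<lambda>x. s * f x) (ennreal s * lam) = distf M f lam" for lam
  proof -
    have "ennreal \<bar>s * f x\<bar> = ennreal s * ennreal \<bar>f x\<bar>" for x
      using s by (simp add: abs_mult ennreal_mult)
    then show ?thesis unfolding distf_def using ennreal_cmult_less_iff[OF sne] by simp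
  qed
  have r: "rearr M (\<lambda>x. s * f x) t \<le> ennreal s * rearr M f t" for t
  proof -
    let ?I = "rearr M (\<lambda>x. s * f x) t"
    have "inverse (ennreal s) * ?I \<le> rearr M f t"
      unfolding rearr_def[of M f]
    proof (rule Inf_greatest)
      fix lam assume "lam \<in> {lam. 0 < lam \<and> distf M f lam \<le> ennreal t}"
      then have "ennreal s * lam \<in> {lam. 0 < lam \<and> distf M (\<lambda>x. s * f x) lam \<le> ennreal t}"
        using d sne s by (auto simp: ennreal_zero_less_mult_iff)
      then have "?I \<le> ennreal s * lam" unfolding rearr_def by (rule Inf_lower)
      then have "inverse (ennreal s) * ?I \<le> inverse (ennreal s) * (ennreal s * lam)"
        by (rule mult_left_mono) simp
      also have "\<dots> = lam" by (simp add: mult.assoc[symmetric] ci)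
      finally show "inverse (ennreal s) * ?I \<le> lam" .
    qed
    then have "ennreal s * (inverse (ennreal s) * ?I) \<le> ennreal s * rearr M f t"
      by (rule mult_left_mono) simp
    thus ?thesis by (simp add: ic2)
  qed
  have p: "phi_ext \<phi> (ennreal s * y) \<le> ennreal s * phi_ext \<phi> y" for y
  proof (cases "y = \<infinity>")
    case True thus ?thesis using sne by (simp add: phi_ext_def ennreal_mult_top)
  next
    case False
    then obtain r where r: "y = ennreal r" "0 \<le> r" by (cases y) auto
    have "\<phi> (s * r) \<le> s * \<phi> r" using orl_convex[OF orl] s r by auto
    then have "ennreal (\<phi> (s * r)) \<le> ennreal (s * \<phi> r)" by (rule ennreal_leI)
    thus ?thesis using r s orl_nonneg[OF orl r(2)]
      by (simp add: phi_ext_def ennreal_mult[symmetric] mult_nonneg_nonneg)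
  qed
  have "modular M \<phi> h (\<lambda>x. s * f x) \<le>
      (\<integral>\<^sup>+ t. ennreal s * (phi_ext \<phi> (rearr M f t) * ennreal (h t) * indicator (wdom M) t) \<partial>lborel)"
    unfolding modular_def
  proof (intro nn_integral_mono)
    fix t
    have "phi_ext \<phi> (rearr M (\<lambda>x. s * f x) t) \<le> ennreal s * phi_ext \<phi> (rearr M f t)"
      using phi_ext_mono[OF orl r] p order.trans by blast
    then have "phi_ext \<phi> (rearr M (\<lambda>x. s * f x) t) * (ennreal (h t) * indicator (wdom M) t)
       \<le> (ennreal s * phi_ext \<phi> (rearr M f t)) * (ennreal (h t) * indicator (wdom M) t)"
      by (rule mult_right_mono) simp
    thus "phi_ext \<phi> (rearr M (\<lambda>x. s * f x) t) * ennreal (h t) * indicator (wdom M) t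
        \<le> ennreal s * (phi_ext \<phi> (rearr M f t) * ennreal (h t) * indicator (wdom M) t)"
      by (simp add: mult.assoc mult_right_mono)
  qed
  also have "\<dots> = ennreal s * modular M \<phi> h f" unfolding modular_def
    by (rule nn_integral_cmult_gen[OF sne])
  finally show ?thesis .
qed

lemma OL_set_ne: assumes orl: "orlicz \<phi>" and f: "f \<in> OL_space M \<phi> h"
  shows "\<exists>lam>0. modular M \<phi> h (\<lambda>x. f x / lam) \<le> 1"
proof -
  obtain l where l: "0 < l" "modular M \<phi> h (\<lambda>x. l * f x) < \<infinity>" using f unfolding OL_space_def by blast
  define m where "m = enn2real (modular M \<phi> h (\<lambda>x. l * f x))"
  have mm: "modular M \<phi> h (\<lambda>x. l * f x) = ennreal m" "0 \<le> m" using l(2) by (auto simp: m_def ennreal_enn2real_if)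
  define s where "s = 1 / (m + 1)"
  have s: "0 < s" "s \<le> 1" using mm by (auto simp: s_def)
  have "modular M \<phi> h (\<lambda>x. s * (l * f x)) \<le> ennreal s * ennreal m"
    using modular_scale[OF orl s, of M h "\<lambda>x. l * f x"] mm by simp
  also have "\<dots> = ennreal (s * m)" using mm s by (simp add: ennreal_mult)
  also have "\<dots> \<le> 1" using mm by (simp add: s_def)
  finally have *: "modular M \<phi> h (\<lambda>x. s * (l * f x)) \<le> 1" .
  have "(\<lambda>x. f x / (1 / (s * l))) = (\<lambda>x. s * (l * f x))" by (simp add: field_simps)
  then show ?thesis using * s l by (intro exI[of _ "1/(s*l)"]) auto
qed

lemma OL_norm_zero:
  assumes orl: "orlicz \<phi>" and g: "g \<in> borel_measurable M" and E: "emeasure M {x \<in> space M. g x \<noteq> 0} = 0"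
  shows "OL_norm M \<phi> h g = 0"
proof -
  have Es: "{x \<in> space M. g x \<noteq> 0} \<in> sets M" using g by measurable
  have "modular M \<phi> h (\<lambda>x. g x / lam) = 0" if "0 < lam" for lam :: real
  proof -
    have "distf M (\<lambda>x. g x / lam) l = 0" for l
    proof -
      have "{x \<in> space M. l < ennreal \<bar>g x / lam\<bar>} \<subseteq> {x \<in> space M. g x \<noteq> 0}" by auto
      then have "distf M (\<lambda>x. g x / lam) l \<le> 0" unfolding distf_def
        using emeasure_mono[OF _ Es] E by metis
      thus ?thesis by simp
    qed
    then have "rearr M (\<lambda>x. g x / lam) t = 0" for t
    proof -
      have "{l2. 0 < l2 \<and> distf M (\<lambda>x. g x / lam) l2 \<le> ennreal t} = {0<..}"
        using \<open>\<And>l. distf M (\<lambda>x. g x / lam) l = 0\<close> by auto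
      thus ?thesis unfolding rearr_def by simp
    qed
    moreover have "phi_ext \<phi> 0 = ennreal (\<phi> 0)" by (simp add: phi_ext_def)
    ultimately show ?thesis unfolding modular_def using orlD(2)[OF orl] by simp
  qed
  then have "{lam. 0 < lam \<and> modular M \<phi> h (\<lambda>x. g x / lam) \<le> 1} = {0<..}" by auto
  thus ?thesis unfolding OL_norm_def by simp
qed



lemma cdsD: assumes "comp_dyn_system M \<phi> h \<tau>"
  shows "sigma_finite_measure M" "orlicz \<phi>" "weight M h" "\<tau> \<in> M \<rightarrow>\<^sub>M M"
    "\<exists>c>0. \<forall>A\<in>sets M. emeasure M (\<tau> -` A \<inter> space M) \<le> ennreal c * emeasure M A"
    "\<And>g. g \<in> OL_space M \<phi> h \<Longrightarrow> (\<lambda>x. g (\<tau> x)) \<in> OL_space M \<phi> h"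
  using assms unfolding comp_dyn_system_def by blast+

lemma tau_space: "\<tau> \<in> M \<rightarrow>\<^sub>M M \<Longrightarrow> x \<in> space M \<Longrightarrow> (\<tau>^^n) x \<in> space M"
  by (rule measurable_space[OF measurable_compose_n])

lemma OL_iter: assumes "\<And>g. g \<in> OL_space M \<phi> h \<Longrightarrow> (\<lambda>x. g (\<tau> x)) \<in> OL_space M \<phi> h"
    "g \<in> OL_space M \<phi> h"
  shows "(\<lambda>x. g ((\<tau>^^n) x)) \<in> OL_space M \<phi> h"
proof (induction n)
  case 0 thus ?case using assms(2) by simp
next
  case (Suc n)
  have "(\<lambda>x. g ((\<tau>^^Suc n) x)) = (\<lambda>x. (\<lambda>y. g ((\<tau>^^n) y)) (\<tau> x))"
    by (simp add: funpow_swap1)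
  thus ?case using assms(1)[OF Suc] by simp
qed

lemma pre_bound: assumes t: "\<tau> \<in> M \<rightarrow>\<^sub>M M" and c: "0 < c"
    and cb: "\<forall>A\<in>sets M. emeasure M (\<tau> -` A \<inter> space M) \<le> ennreal c * emeasure M A"
    and A: "A \<in> sets M"
  shows "emeasure M ((\<tau>^^n) -` A \<inter> space M) \<le> ennreal (c^n) * emeasure M A"
proof (induction n)
  case 0
  have "(\<tau>^^0) -` A \<inter> space M = A" using sets.sets_into_space[OF A] by auto
  thus ?case by simp
next
  case (Suc n)
  have eq: "(\<tau>^^Suc n) -` A \<inter> space M = \<tau> -` ((\<tau>^^n) -` A \<inter> space M) \<inter> space M"
    using measurable_space[OF t] by (auto simp: funpow_swap1)
  have Bs: "(\<tau>^^n) -` A \<inter> space M \<in> sets M" by (rule measurable_sets[OF measurable_compose_n[OF t] A])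
  have "emeasure M ((\<tau>^^Suc n) -` A \<inter> space M) \<le> ennreal c * emeasure M ((\<tau>^^n) -` A \<inter> space M)"
    unfolding eq using cb Bs by blast
  also have "\<dots> \<le> ennreal c * (ennreal (c^n) * emeasure M A)"
    by (rule mult_left_mono[OF Suc]) simp
  also have "\<dots> = ennreal (c^Suc n) * emeasure M A"
    using c by (simp add: ennreal_mult mult.assoc)
  finally show ?case .
qed

lemma shift_pre: assumes t: "\<tau> \<in> M \<rightarrow>\<^sub>M M" and x: "x \<in> space M"
  shows "(\<tau>^^m) x \<in> (\<tau>^^n) -` A \<inter> space M \<longleftrightarrow> x \<in> (\<tau>^^(n+m)) -` A \<inter> space M"
  using tau_space[OF t x, of m] x by (simp add: funpow_add)

lemma v_eq: assumes "orlicz \<phi>" "W \<noteq> 0" "W < \<infinity>"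
  shows "orlicz_inv_ext \<phi> (1 / W) = ennreal (orlicz_inv \<phi> (1 / enn2real W))" "0 < enn2real W"
proof -
  obtain w where w: "W = ennreal w" "0 \<le> w" using assms(3) by (cases W) auto
  then have wp: "0 < w" using assms(2) by (cases "w = 0") auto
  have "1 / W = ennreal (1 / w)" using w wp by (simp add: divide_ennreal[symmetric])
  thus "orlicz_inv_ext \<phi> (1 / W) = ennreal (orlicz_inv \<phi> (1 / enn2real W))"
    using w wp by (simp add: orlicz_inv_ext_def)
  show "0 < enn2real W" using w wp by simp
qed

lemma v_zero: "orlicz_inv_ext \<phi> (1 / 0) = \<infinity>"
  by (simp add: orlicz_inv_ext_def)



lemma fwd:
  assumes cds: "comp_dyn_system M \<phi> h \<tau>" and exp: "comp_pos_expansive M \<phi> h \<tau>"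
    and A: "A \<in> sets M" "0 < emeasure M A" "emeasure M A < \<infinity>"
  shows "(INF n\<in>{1::nat..}. orlicz_inv_ext \<phi>
          (1 / Wint h (enn2real (emeasure M ((\<tau> ^^ n) -` A \<inter> space M))))) = 0"
proof -
  note orl = cdsD(2)[OF cds] and wt = cdsD(3)[OF cds] and t = cdsD(4)[OF cds]
  obtain c where c: "0 < c" "\<forall>A\<in>sets M. emeasure M (\<tau> -` A \<inter> space M) \<le> ennreal c * emeasure M A"
    using cdsD(5)[OF cds] by blast
  define B where "B n = (\<tau> ^^ n) -` A \<inter> space M" for n
  define W where "W n = Wint h (enn2real (emeasure M (B n)))" for n
  define ps where "ps n = orlicz_inv \<phi> (1 / enn2real (W n))" for n
  have Bs: "B n \<in> sets M" for n unfolding B_def by (rule measurable_sets[OF measurable_compose_n[OF t] A(1)])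
  have Bfin: "emeasure M (B n) < \<infinity>" for n
  proof -
    have "emeasure M (B n) \<le> ennreal (c^n) * emeasure M A" unfolding B_def by (rule pre_bound[OF t c A(1)])
    also have "\<dots> < \<infinity>" using A(3) by (simp add: ennreal_mult_less_top)
    finally show ?thesis .
  qed
  have Wfin: "W n < \<infinity>" for n unfolding W_def by (rule Wint_fin_B[OF wt Bs Bfin])
  have veq: "W n \<noteq> 0 \<Longrightarrow> orlicz_inv_ext \<phi> (1 / W n) = ennreal (ps n) \<and> 0 < ps n" for n
    using v_eq[OF orl _ Wfin[of n]] orl_inv_pos[OF orl] unfolding ps_def by auto
  have step: "\<exists>m. W (n+m) \<noteq> 0 \<and> 1 \<le> m \<and> ps (n+m) \<le> ps n / 2" if Wn: "W n \<noteq> 0" for n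
  proof -
    define g where "g x = ps n * indicator (B n) x" for x
    have pn: "0 < ps n" using veq[OF Wn] by simp
    have gm: "g \<in> borel_measurable M" unfolding g_def using Bs by measurable
    have "modular M \<phi> h (\<lambda>x. 1 * g x) = ennreal (\<phi> (ps n)) * W n"
      unfolding g_def W_def using modular_ind[where \<phi>=\<phi> and h=h, OF Bs[of n] pn Bfin[of n] orlD(2)[OF orl]] by simp
    then have "modular M \<phi> h (\<lambda>x. 1 * g x) < \<infinity>" using Wfin[of n] by (simp add: ennreal_mult_less_top)
    then have gOL: "g \<in> OL_space M \<phi> h" using gm unfolding OL_space_def by (auto intro!: exI[of _ 1])
    have "OL_norm M \<phi> h g = ps n / ps n"
      using norm_ind(2)[OF orl wt Bs[of n] Bfin[of n] pn, of g] Wn by (simp add: g_def W_def ps_def)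
    then have "OL_norm M \<phi> h g = 1" using pn by simp
    then obtain m where m: "OL_norm M \<phi> h (\<lambda>x. g ((\<tau>^^m) x)) \<ge> 2"
      using exp gOL unfolding comp_pos_expansive_def by blast
    have eqs: "\<And>x. x \<in> space M \<Longrightarrow> g ((\<tau>^^m) x) = ps n * indicator (B (n+m)) x"
      unfolding g_def B_def using shift_pre[OF t] by (simp add: indicator_def)
    have W1: "W (n+m) \<noteq> 0"
    proof
      assume "W (n+m) = 0"
      then have "OL_norm M \<phi> h (\<lambda>x. g ((\<tau>^^m) x)) = 0"
        using norm_ind(1)[OF orl wt Bs[of "n+m"] Bfin[of "n+m"] pn eqs] by (simp add: W_def)
      thus False using m by simp
    qed
    have "OL_norm M \<phi> h (\<lambda>x. g ((\<tau>^^m) x)) = ps n / ps (n+m)"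
      using norm_ind(2)[OF orl wt Bs[of "n+m"] Bfin[of "n+m"] pn eqs] W1 by (simp add: W_def ps_def)
    then have "2 \<le> ps n / ps (n+m)" using m by simp
    moreover have "0 < ps (n+m)" using veq[OF W1] by simp
    ultimately have le: "ps (n+m) \<le> ps n / 2" by (simp add: field_simps)
    have "m \<noteq> 0" proof assume "m = 0" thus False using le pn by simp qed
    thus ?thesis using W1 le by (intro exI[of _ m]) auto
  qed
  have W0: "W 0 \<noteq> 0"
  proof -
    have B0: "B 0 = A" unfolding B_def using sets.sets_into_space[OF A(1)] by auto
    have "ennreal (enn2real (emeasure M A)) = emeasure M A" using A(3) by (simp add: ennreal_enn2real_if)
    moreover have "0 < enn2real (emeasure M A)" using A(2,3) by (simp add: enn2real_positive_iff)
    ultimately show ?thesis unfolding W_def B0 using Wint_pos[OF wt] emeasure_space[of M A] by metis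
  qed
  have iter: "\<exists>n\<ge>k. W n \<noteq> 0 \<and> ps n \<le> ps 0 / 2^k" for k
  proof (induction k)
    case 0 thus ?case using W0 by auto
  next
    case (Suc k)
    then obtain n where n: "n \<ge> k" "W n \<noteq> 0" "ps n \<le> ps 0 / 2^k" by blast
    obtain m where m: "W (n+m) \<noteq> 0" "1 \<le> m" "ps (n+m) \<le> ps n / 2" using step[OF n(2)] by blast
    have "ps n / 2 \<le> (ps 0 / 2^k) / 2" using n(3) by (rule divide_right_mono) simp
    then have "ps (n+m) \<le> ps 0 / 2^Suc k" using m(3) by simp
    thus ?case using n m by (intro exI[of _ "n+m"]) auto
  qed
  have C0: "0 < ps 0" using veq[OF W0] by simp
  have "(INF n\<in>{1::nat..}. orlicz_inv_ext \<phi> (1 / W n)) \<le> 0"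
  proof (rule ennreal_le_epsilon)
    fix e :: real assume e: "0 < e"
    obtain k where k: "(1/2::real)^k < e / ps 0" using real_arch_pow_inv[of "e / ps 0" "1/2"] e C0 by auto
    obtain n where n: "n \<ge> Suc k" "W n \<noteq> 0" "ps n \<le> ps 0 / 2^Suc k" using iter by blast
    have "ps 0 / 2^Suc k \<le> ps 0 * (1/2)^k" using C0 by (simp add: field_simps)
    also have "\<dots> < e" using k C0 by (simp add: field_simps)
    finally have "ps n < e" using n(3) by simp
    have "(INF n\<in>{1::nat..}. orlicz_inv_ext \<phi> (1 / W n)) \<le> orlicz_inv_ext \<phi> (1 / W n)"
      using n(1) by (intro INF_lower) auto
    also have "\<dots> = ennreal (ps n)" using veq[OF n(2)] by simp
    also have "\<dots> \<le> ennreal e" using \<open>ps n < e\<close> by (simp add: ennreal_leI)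
    finally show "(INF n\<in>{1::nat..}. orlicz_inv_ext \<phi> (1 / W n)) \<le> 0 + ennreal e" by simp
  qed
  thus ?thesis unfolding W_def B_def by simp
qed



lemma find_set:
  fixes g :: "'a \<Rightarrow> real"
  assumes sf: "sigma_finite_measure M" and gm: "g \<in> borel_measurable M"
    and E: "emeasure M {x \<in> space M. g x \<noteq> 0} \<noteq> 0"
  shows "\<exists>A e. A \<in> sets M \<and> 0 < emeasure M A \<and> emeasure M A < \<infinity> \<and> 0 < e \<and>
     (\<forall>x\<in>A. e < \<bar>g x\<bar>)"
proof -
  obtain Om :: "nat \<Rightarrow> _" where Om: "range Om \<subseteq> sets M" "(\<Union>i. Om i) = space M" "\<And>i. emeasure M (Om i) \<noteq> \<infinity>"
    using sigma_finite_measure.sigma_finite[OF sf] by metis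
  define Ek where "Ek k = {x \<in> space M. 1 / real (Suc k) < \<bar>g x\<bar>}" for k
  have Eks: "Ek k \<in> sets M" for k unfolding Ek_def using gm by measurable
  have "\<exists>k i. Ek k \<inter> Om i \<notin> null_sets M"
  proof (rule ccontr)
    assume "\<not> ?thesis"
    then have nn: "Ek k \<inter> Om i \<in> null_sets M" for k i by blast
    have "Ek k = (\<Union>i. Ek k \<inter> Om i)" for k using Om(2) by (auto simp: Ek_def)
    then have "Ek k \<in> null_sets M" for k using nn by (metis null_sets_UN)
    then have U: "(\<Union>k. Ek k) \<in> null_sets M" by (rule null_sets_UN)
    have Es: "{x \<in> space M. g x \<noteq> 0} \<in> sets M" using gm by measurable
    have "{x \<in> space M. g x \<noteq> 0} \<subseteq> (\<Union>k. Ek k)"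
    proof
      fix x assume x: "x \<in> {x \<in> space M. g x \<noteq> 0}"
      then have "0 < \<bar>g x\<bar>" by simp
      then obtain k where "inverse (real (Suc k)) < \<bar>g x\<bar>" using reals_Archimedean by blast
      thus "x \<in> (\<Union>k. Ek k)" using x by (auto simp: Ek_def field_simps)
    qed
    then have "{x \<in> space M. g x \<noteq> 0} \<in> null_sets M" using null_sets_subset[OF U Es] by blast
    thus False using E by (simp add: null_sets_def)
  qed
  then obtain k i where ki: "Ek k \<inter> Om i \<notin> null_sets M" by blast
  have As: "Ek k \<inter> Om i \<in> sets M" using Eks Om(1) by auto
  have "emeasure M (Ek k \<inter> Om i) \<le> emeasure M (Om i)" using Om(1) by (intro emeasure_mono) auto
  then have "emeasure M (Ek k \<inter> Om i) < \<infinity>" using Om(3)[of i] by (simp add: top.not_eq_extremum le_less_trans)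
  moreover have "0 < emeasure M (Ek k \<inter> Om i)" using ki As by (simp add: null_sets_def zero_less_iff_neq_zero)
  ultimately show ?thesis using As
    by (intro exI[of _ "Ek k \<inter> Om i"] exI[of _ "1 / real (Suc k)"]) (auto simp: Ek_def)
qed

lemma bwd:
  assumes cds: "comp_dyn_system M \<phi> h \<tau>"
    and R: "\<forall>A\<in>sets M. 0 < emeasure M A \<and> emeasure M A < \<infinity> \<longrightarrow>
       (INF n\<in>{1::nat..}. orlicz_inv_ext \<phi>
          (1 / Wint h (enn2real (emeasure M ((\<tau> ^^ n) -` A \<inter> space M))))) = 0"
  shows "comp_pos_expansive M \<phi> h \<tau>"
  unfolding comp_pos_expansive_def
proof (intro ballI impI)
  fix g assume gOL: "g \<in> OL_space M \<phi> h" and g1: "OL_norm M \<phi> h g = 1"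
  note orl = cdsD(2)[OF cds] and wt = cdsD(3)[OF cds] and t = cdsD(4)[OF cds]
  obtain c where c: "0 < c" "\<forall>A\<in>sets M. emeasure M (\<tau> -` A \<inter> space M) \<le> ennreal c * emeasure M A"
    using cdsD(5)[OF cds] by blast
  have gm: "g \<in> borel_measurable M" using gOL unfolding OL_space_def by blast
  have "emeasure M {x \<in> space M. g x \<noteq> 0} \<noteq> 0" using OL_norm_zero[OF orl gm] g1 by auto
  then obtain A e where A: "A \<in> sets M" "0 < emeasure M A" "emeasure M A < \<infinity>" "0 < e"
    "\<forall>x\<in>A. e < \<bar>g x\<bar>" using find_set[OF cdsD(1)[OF cds] gm] by blast
  define B where "B n = (\<tau> ^^ n) -` A \<inter> space M" for n
  define W where "W n = Wint h (enn2real (emeasure M (B n)))" for n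
  have Bs: "B n \<in> sets M" for n unfolding B_def by (rule measurable_sets[OF measurable_compose_n[OF t] A(1)])
  have Bfin: "emeasure M (B n) < \<infinity>" for n
  proof -
    have "emeasure M (B n) \<le> ennreal (c^n) * emeasure M A" unfolding B_def by (rule pre_bound[OF t c A(1)])
    also have "\<dots> < \<infinity>" using A(3) by (simp add: ennreal_mult_less_top)
    finally show ?thesis .
  qed
  have Wfin: "W n < \<infinity>" for n unfolding W_def by (rule Wint_fin_B[OF wt Bs Bfin])
  have "(INF n\<in>{1::nat..}. orlicz_inv_ext \<phi> (1 / W n)) = 0" using R A unfolding W_def B_def by blast
  then have "(INF n\<in>{1::nat..}. orlicz_inv_ext \<phi> (1 / W n)) < ennreal (e/2)" using A(4) by simp
  then obtain n where n: "orlicz_inv_ext \<phi> (1 / W n) < ennreal (e/2)" by (auto simp: INF_less_iff)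
  have Wn: "W n \<noteq> 0" proof assume "W n = 0" thus False using n by (simp add: orlicz_inv_ext_def) qed
  define w where "w = enn2real (W n)"
  have wp: "0 < w" and Ww: "W n = ennreal w" using v_eq(2)[OF orl Wn Wfin] Wfin[of n]
    by (auto simp: w_def ennreal_enn2real_if)
  have "ennreal (orlicz_inv \<phi> (1 / w)) < ennreal (e/2)" using n v_eq(1)[OF orl Wn Wfin] by (simp add: w_def)
  then have ps: "orlicz_inv \<phi> (1 / w) < e/2" using orl_inv(1)[OF orl, of "1/w"] wp by (simp add: ennreal_less_iff)
  define f where "f x = g ((\<tau>^^n) x)" for x
  have fOL: "f \<in> OL_space M \<phi> h" unfolding f_def by (rule OL_iter[OF cdsD(6)[OF cds] gOL])
  have fm: "f \<in> borel_measurable M" using fOL unfolding OL_space_def by blast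
  obtain l0 where l0: "0 < l0" "modular M \<phi> h (\<lambda>x. f x / l0) \<le> 1" using OL_set_ne[OF orl fOL] by blast
  have "2 \<le> OL_norm M \<phi> h f" unfolding OL_norm_def
  proof (rule cInf_greatest)
    show "{lam. 0 < lam \<and> modular M \<phi> h (\<lambda>x. f x / lam) \<le> 1} \<noteq> {}" using l0 by blast
  next
    fix lam assume "lam \<in> {lam. 0 < lam \<and> modular M \<phi> h (\<lambda>x. f x / lam) \<le> 1}"
    then have l: "0 < lam" "modular M \<phi> h (\<lambda>x. f x / lam) \<le> 1" by auto
    have "modular M \<phi> h (\<lambda>x. (e / lam) * indicator (B n) x) \<le> modular M \<phi> h (\<lambda>x. f x / lam)"
    proof (rule modular_mono[OF orl])
      show "(\<lambda>x. f x / lam) \<in> borel_measurable M" using fm by measurable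
    next
      fix x assume x: "x \<in> space M"
      show "\<bar>e / lam * indicator (B n) x\<bar> \<le> \<bar>f x / lam\<bar>"
      proof (cases "x \<in> B n")
        case True
        then have "e < \<bar>f x\<bar>" using A(5) by (auto simp: B_def f_def)
        then show ?thesis using True l(1) A(4) by (simp add: divide_right_mono)
      qed simp
    qed
    also have "\<dots> \<le> 1" by (rule l(2))
    finally have "ennreal (\<phi> (e / lam)) * ennreal w \<le> 1"
      using modular_ind[where \<phi>=\<phi> and h=h, OF Bs[of n] _ Bfin[of n] orlD(2)[OF orl], of "e/lam"] l(1) A(4) Ww
      by (simp add: W_def)
    then have "e / lam \<le> orlicz_inv \<phi> (1 / w)" using ind_le_iff[OF orl _ wp, of "e/lam"] l(1) A(4) by simp
    then have "e / lam < e / 2" using ps by linarith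
    thus "2 \<le> lam" using l(1) A(4) by (simp add: field_simps)
  qed
  thus "\<exists>n. 2 \<le> OL_norm M \<phi> h (\<lambda>x. g ((\<tau> ^^ n) x))" unfolding f_def by blast
qed


theorem mainTheorem2:
  assumes "comp_dyn_system M \<phi> h \<tau>"
  shows "comp_pos_expansive M \<phi> h \<tau> \<longleftrightarrow>
    (\<forall>A\<in>sets M. 0 < emeasure M A \<and> emeasure M A < \<infinity> \<longrightarrow>
       (INF n\<in>{1::nat..}. orlicz_inv_ext \<phi>
          (1 / Wint h (enn2real (emeasure M ((\<tau> ^^ n) -` A \<inter> space M))))) = 0)"
  using fwd[OF assms] bwd[OF assms] by blast

end
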